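(* If $(A,W)$ is a $T_1$ Pratt comonoid with $W$ countably infinite, then there exist crosswords over $W$ with infinitely many distinct rows and infinitely many distinct columns.
   Context: A Pratt comonoid is a pair $(A,W)$ where $A$ is a set and $W$ is a set of subsets of $A$ such that (i) $\emptyset\in W$ and $A\in W$; (ii) whenever $C\subseteq A\times A$ is such that for every $a\in A$ both the $a$-th row $\{b\mid (a,b)\in C\}$ and the $a$-th column $\{b\mid (b,a)\in C\}$ belong to $W$ (such $C$ is called a crossword over $W$), the diagonal $\{b\mid (b,b)\in C\}$ also belongs to $W$. $(A,W)$ is $T_1$ if for all distinct $a,b\in A$ some member of $W$ contains $a$ but not $b$. *)

theory Defs
  imports Main "HOL-Library.Countable_Set"
begin

definition row :: "('a \<times> 'a) set \<Rightarrow> 'a \<Rightarrow> 'a set" where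
  "row C a = {b. (a, b) \<in> C}"

definition col :: "('a \<times> 'a) set \<Rightarrow> 'a \<Rightarrow> 'a set" where
  "col C a = {b. (b, a) \<in> C}"

definition diag :: "('a \<times> 'a) set \<Rightarrow> 'a set" where
  "diag C = {b. (b, b) \<in> C}"

definition crossword :: "'a set \<Rightarrow> 'a set set \<Rightarrow> ('a \<times> 'a) set \<Rightarrow> bool" where
  "crossword A W C \<longleftrightarrow> C \<subseteq> A \<times> A \<and> (\<forall>a\<in>A. row C a \<in> W \<and> col C a \<in> W)"

definition pratt_comonoid :: "'a set \<Rightarrow> 'a set set \<Rightarrow> bool" where
  "pratt_comonoid A W \<longleftrightarrow> W \<subseteq> Pow A \<and> {} \<in> W \<and> A \<in> W \<and>
     (\<forall>C. crossword A W C \<longrightarrow> diag C \<in> W)"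

definition pratt_T1 :: "'a set \<Rightarrow> 'a set set \<Rightarrow> bool" where
  "pratt_T1 A W \<longleftrightarrow> (\<forall>a\<in>A. \<forall>b\<in>A. a \<noteq> b \<longrightarrow> (\<exists>U\<in>W. a \<in> U \<and> b \<notin> U))"

end

theory Submission
  imports Defs
begin

lemma pc_basic:
  assumes "pratt_comonoid A W"
  shows "W \<subseteq> Pow A" "{} \<in> W" "A \<in> W"
  using assms unfolding pratt_comonoid_def by auto

lemma pc_inter:
  assumes pc: "pratt_comonoid A W" and UV: "U \<in> W" "V \<in> W"
  shows "U \<inter> V \<in> W"
proof -
  note b = pc_basic[OF pc]
  let ?C = "U \<times> V"
  have "crossword A W ?C"
    unfolding crossword_def
  proof (intro conjI ballI)
    show "?C \<subseteq> A \<times> A" using b UV by blast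
  next
    fix a assume "a \<in> A"
    have "row ?C a = (if a \<in> U then V else {})" unfolding row_def by auto
    thus "row ?C a \<in> W" using UV b by simp
  next
    fix a assume "a \<in> A"
    have "col ?C a = (if a \<in> V then U else {})" unfolding col_def by auto
    thus "col ?C a \<in> W" using UV b by simp
  qed
  hence "diag ?C \<in> W" using pc unfolding pratt_comonoid_def by blast
  moreover have "diag ?C = U \<inter> V" unfolding diag_def by auto
  ultimately show ?thesis by simp
qed

lemma pc_union:
  assumes pc: "pratt_comonoid A W" and UV: "U \<in> W" "V \<in> W"
  shows "U \<union> V \<in> W"
proof -
  note b = pc_basic[OF pc]
  have UA: "U \<subseteq> A" "V \<subseteq> A" using b UV by auto
  let ?C = "U \<times> A \<union> A \<times> V"
  have "crossword A W ?C"
    unfolding crossword_def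
  proof (intro conjI ballI)
    show "?C \<subseteq> A \<times> A" using UA by blast
  next
    fix a assume "a \<in> A"
    hence "row ?C a = (if a \<in> U then A else V)" using UA unfolding row_def by auto
    thus "row ?C a \<in> W" using UV b by simp
  next
    fix a assume "a \<in> A"
    hence "col ?C a = (if a \<in> V then A else U)" using UA unfolding col_def by auto
    thus "col ?C a \<in> W" using UV b by simp
  qed
  hence "diag ?C \<in> W" using pc unfolding pratt_comonoid_def by blast
  moreover have "diag ?C = U \<union> V" using UA unfolding diag_def by auto
  ultimately show ?thesis by simp
qed

lemma pc_Union:
  assumes pc: "pratt_comonoid A W" and "finite F" "F \<subseteq> W"
  shows "\<Union>F \<in> W"
  using assms(2,3)
proof (induction F rule: finite_induct)
  case empty then show ?case using pc_basic[OF pc] by simp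
next
  case (insert x F) then show ?case using pc_union[OF pc] by simp
qed

lemma pc_Inter:
  assumes pc: "pratt_comonoid A W" and "finite F" "F \<subseteq> W"
  shows "A \<inter> \<Inter>F \<in> W"
  using assms(2,3)
proof (induction F rule: finite_induct)
  case empty then show ?case using pc_basic[OF pc] by simp
next
  case (insert x F)
  have "A \<inter> \<Inter>(insert x F) = x \<inter> (A \<inter> \<Inter>F)" by auto
  then show ?case using insert pc_inter[OF pc] by simp
qed

lemma infinite_up:
  fixes S :: "'b set set"
  assumes "S \<noteq> {}" "\<And>s. s \<in> S \<Longrightarrow> \<exists>t\<in>S. s \<subset> t"
  shows "infinite S"
proof
  assume "finite S"
  then obtain m where m: "m \<in> S" "\<forall>b\<in>S. m \<le> b \<longrightarrow> m = b"
    using finite_has_maximal assms(1) by blast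
  then obtain t where t: "t \<in> S" "m \<subset> t" using assms(2) by blast
  then have "m \<le> t" "m \<noteq> t" by auto
  then show False using m(2) t(1) by metis
qed

lemma infinite_down:
  fixes S :: "'b set set"
  assumes "S \<noteq> {}" "\<And>s. s \<in> S \<Longrightarrow> \<exists>t\<in>S. t \<subset> s"
  shows "infinite S"
proof
  assume "finite S"
  then obtain m where m: "m \<in> S" "\<forall>b\<in>S. b \<le> m \<longrightarrow> m = b"
    using finite_has_minimal assms(1) by blast
  then obtain t where t: "t \<in> S" "t \<subset> m" using assms(2) by blast
  then have "t \<le> m" "m \<noteq> t" by auto
  then show False using m(2) t(1) by metis
qed

lemma disjoint_crossword:
  assumes sub: "W \<subseteq> Pow A" and e: "{} \<in> W"
    and D: "\<D> \<subseteq> W" "infinite \<D>" "\<And>X. X \<in> \<D> \<Longrightarrow> X \<noteq> {}"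
    "\<And>X Y. X \<in> \<D> \<Longrightarrow> Y \<in> \<D> \<Longrightarrow> X \<noteq> Y \<Longrightarrow> X \<inter> Y = {}"
  shows "\<exists>C. crossword A W C \<and> infinite (row C ` A) \<and> infinite (col C ` A)"
proof -
  define C where "C = {(x,y). \<exists>X\<in>\<D>. x \<in> X \<and> y \<in> X}"
  have rc: "row C x = col C x" for x unfolding C_def row_def col_def by auto
  have rowX: "row C x = X" if "X \<in> \<D>" "x \<in> X" for x X
  proof (rule set_eqI)
    fix y
    have "(\<exists>Y\<in>\<D>. x \<in> Y \<and> y \<in> Y) \<longleftrightarrow> y \<in> X"
    proof
      assume "\<exists>Y\<in>\<D>. x \<in> Y \<and> y \<in> Y"
      then obtain Y where Y: "Y \<in> \<D>" "x \<in> Y" "y \<in> Y" by blast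
      have "Y = X"
      proof (rule ccontr)
        assume "Y \<noteq> X"
        then have "Y \<inter> X = {}" using D(4)[OF Y(1) that(1)] by simp
        then show False using Y(2) that(2) by blast
      qed
      then show "y \<in> X" using Y by simp
    next
      assume "y \<in> X" then show "\<exists>Y\<in>\<D>. x \<in> Y \<and> y \<in> Y" using that by blast
    qed
    then show "y \<in> row C x \<longleftrightarrow> y \<in> X" unfolding C_def row_def by simp
  qed
  have rowE: "row C x = {}" if "\<forall>X\<in>\<D>. x \<notin> X" for x
    using that unfolding C_def row_def by blast
  have rowW: "row C x \<in> W" for x
  proof (cases "\<exists>X\<in>\<D>. x \<in> X")
    case True then show ?thesis using rowX D(1) by blast
  next
    case False then show ?thesis using rowE e by simp
  qed
  have CA: "C \<subseteq> A \<times> A"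
  proof
    fix p assume "p \<in> C"
    then obtain X where "X \<in> \<D>" "fst p \<in> X" "snd p \<in> X" unfolding C_def by auto
    moreover have "X \<subseteq> A" using \<open>X \<in> \<D>\<close> D(1) sub by blast
    ultimately show "p \<in> A \<times> A" by (cases p) auto
  qed
  have cw: "crossword A W C"
    unfolding crossword_def using rowW rc CA by simp
  have "\<D> \<subseteq> row C ` A"
  proof
    fix X assume X: "X \<in> \<D>"
    then obtain x where "x \<in> X" using D(3) by blast
    moreover have "x \<in> A" using X \<open>x \<in> X\<close> D(1) sub by blast
    ultimately show "X \<in> row C ` A" using rowX[OF X] by force
  qed
  hence "infinite (row C ` A)" using D(2) finite_subset by blast
  moreover have "col C ` A = row C ` A" using rc by simp
  ultimately show ?thesis using cw by auto
qed

lemma chain_crossword: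
  fixes M E :: "nat \<Rightarrow> 'a set"
  assumes sub: "W \<subseteq> Pow A" and e: "{} \<in> W"
    and MW: "\<And>n. M n \<in> W" and EW: "\<And>n. E n \<in> W"
    and Mdec: "\<And>m n. m \<le> n \<Longrightarrow> M n \<subseteq> M m"
    and Einc: "\<And>m n. m \<le> n \<Longrightarrow> E m \<subseteq> E n"
    and Mne: "\<And>n. M n \<noteq> {}"
    and Mempty: "\<And>y. \<exists>n. y \<notin> M n"
    and Mnc: "\<And>n. \<exists>k>n. M k \<noteq> M n"
    and Enc: "\<And>n. \<exists>k>n. E k \<noteq> E n"
  shows "\<exists>C. crossword A W C \<and> infinite (row C ` A) \<and> infinite (col C ` A)"
proof -
  have MA: "M n \<subseteq> A" for n using MW sub by blast
  have EA: "E n \<subseteq> A" for n using EW sub by blast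
  define C where "C = {(x,y). \<exists>n. x \<in> M n \<and> y \<in> E n}"
  have rowk: "\<exists>k. n \<le> k \<and> row C x = E k" if "x \<in> M n" for x n
  proof -
    obtain n0 where n0: "x \<notin> M n0" using Mempty by blast
    have bnd: "j < n0" if "x \<in> M j" for j
    proof (rule ccontr)
      assume "\<not> j < n0"
      then have "M j \<subseteq> M n0" using Mdec by simp
      then show False using that n0 by blast
    qed
    define N where "N = {j. x \<in> M j}"
    have fN: "finite N" unfolding N_def using bnd
      by (metis (mono_tags, lifting) finite_nat_set_iff_bounded mem_Collect_eq)
    have nN: "n \<in> N" unfolding N_def using that by simp
    define k where "k = Max N"
    have kN: "k \<in> N" unfolding k_def using fN nN Max_in[of N] by blast
    have lek: "j \<le> k" if "x \<in> M j" for j unfolding k_def using fN that N_def by simp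
    have "row C x = E k"
    proof (rule set_eqI)
      fix y
      have "(\<exists>j. x \<in> M j \<and> y \<in> E j) \<longleftrightarrow> y \<in> E k"
      proof
        assume "\<exists>j. x \<in> M j \<and> y \<in> E j"
        then obtain j where "x \<in> M j" "y \<in> E j" by blast
        then show "y \<in> E k" using lek Einc by blast
      next
        assume "y \<in> E k" then show "\<exists>j. x \<in> M j \<and> y \<in> E j" using kN N_def by blast
      qed
      then show "y \<in> row C x \<longleftrightarrow> y \<in> E k" unfolding C_def row_def by simp
    qed
    moreover have "n \<le> k" using lek that by simp
    ultimately show ?thesis by blast
  qed
  have row0: "row C x = {}" if "\<forall>n. x \<notin> M n" for x
    using that unfolding C_def row_def by simp
  have rowcase: "\<exists>k. row C x = E k" if "row C x \<noteq> {}" for x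
    using rowk row0 that by blast
  have colm: "col C y = M (LEAST j. y \<in> E j)" if "y \<in> E n" for y n
  proof (rule set_eqI)
    fix x
    let ?m = "LEAST j. y \<in> E j"
    have ym: "y \<in> E ?m" using that by (rule LeastI)
    have mle: "?m \<le> j" if "y \<in> E j" for j using that by (rule Least_le)
    have "(\<exists>j. x \<in> M j \<and> y \<in> E j) \<longleftrightarrow> x \<in> M ?m"
    proof
      assume "\<exists>j. x \<in> M j \<and> y \<in> E j"
      then obtain j where "x \<in> M j" "y \<in> E j" by blast
      then show "x \<in> M ?m" using mle Mdec by blast
    next
      assume "x \<in> M ?m" then show "\<exists>j. x \<in> M j \<and> y \<in> E j" using ym by blast
    qed
    then show "x \<in> col C y \<longleftrightarrow> x \<in> M ?m" unfolding C_def col_def by simp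
  qed
  have col0: "col C y = {}" if "\<forall>n. y \<notin> E n" for y
    using that unfolding C_def col_def by simp
  have CA: "C \<subseteq> A \<times> A" unfolding C_def using MA EA by blast
  have rowW: "row C x \<in> W" for x
    using rowcase[of x] e EW by (cases "row C x = {}") auto
  have colW: "col C y \<in> W" for y
  proof (cases "\<exists>n. y \<in> E n")
    case True
    then obtain n where "y \<in> E n" by blast
    then show ?thesis using colm[of y n] MW by simp
  next
    case False then show ?thesis using col0 e by simp
  qed
  have cw: "crossword A W C" unfolding crossword_def using CA rowW colW by simp
  have rowsub: "\<exists>n. row C x \<subseteq> E n" for x
    using rowcase[of x] by (cases "row C x = {}") auto
  have rowbig: "\<exists>z\<in>A. E n \<subset> row C z" for n
  proof -
    obtain k where k: "k > n" "E k \<noteq> E n" using Enc by blast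
    then have "E n \<subset> E k" using Einc[of n k] by auto
    obtain z where z: "z \<in> M k" using Mne by blast
    then obtain k' where "k \<le> k'" "row C z = E k'" using rowk by blast
    then have "E k \<subseteq> row C z" using Einc by simp
    moreover have "z \<in> A" using z MA by blast
    ultimately show ?thesis using \<open>E n \<subset> E k\<close> by blast
  qed
  have infrow: "infinite (row C ` A)"
  proof (rule infinite_up)
    show "row C ` A \<noteq> {}" using Mne MA by blast
  next
    fix s assume "s \<in> row C ` A"
    then obtain x where s: "s = row C x" by blast
    obtain n where "s \<subseteq> E n" using rowsub s by blast
    moreover obtain z where "z \<in> A" "E n \<subset> row C z" using rowbig by blast
    ultimately have "s \<subset> row C z" by blast
    then show "\<exists>t\<in>row C ` A. s \<subset> t" using \<open>z \<in> A\<close> by blast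
  qed
  have colsmall: "\<exists>z\<in>A. col C z \<noteq> {} \<and> col C z \<subset> M n" for n
  proof -
    obtain k where k: "k > n" "M k \<noteq> M n" using Mnc by blast
    then have Mk: "M k \<subset> M n" using Mdec[of n k] by auto
    obtain j where j: "j > k" "E j \<noteq> E k" using Enc by blast
    then have "E k \<subset> E j" using Einc[of k j] by auto
    then obtain z where z: "z \<in> E j" "z \<notin> E k" by blast
    have "col C z = M (LEAST i. z \<in> E i)" using colm z(1) by blast
    moreover have "k < (LEAST i. z \<in> E i)"
    proof (rule ccontr)
      assume "\<not> k < (LEAST i. z \<in> E i)"
      then have "E (LEAST i. z \<in> E i) \<subseteq> E k" using Einc by simp
      moreover have "z \<in> E (LEAST i. z \<in> E i)" using z(1) by (rule LeastI)
      ultimately show False using z(2) by blast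
    qed
    ultimately have "col C z \<subseteq> M k" "col C z \<noteq> {}" using Mdec Mne by auto
    moreover have "z \<in> A" using z EA by blast
    ultimately show ?thesis using Mk by blast
  qed
  have infcol: "infinite (col C ` A - {{}})"
  proof (rule infinite_down)
    show "col C ` A - {{}} \<noteq> {}" using colsmall[of 0] by blast
  next
    fix s assume "s \<in> col C ` A - {{}}"
    then obtain y where s: "s = col C y" "s \<noteq> {}" by blast
    then obtain n where "y \<in> E n" using col0 by blast
    then have "s = M (LEAST j. y \<in> E j)" using colm s by blast
    then obtain z where "z \<in> A" "col C z \<noteq> {}" "col C z \<subset> s" using colsmall by blast
    then show "\<exists>t\<in>col C ` A - {{}}. t \<subset> s" by blast
  qed
  have "infinite (col C ` A)" using infcol by (meson finite_Diff)
  then show ?thesis using cw infrow by blast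
qed

lemma cosingleton_crossword:
  assumes aW: "A \<in> W" and S: "S \<subseteq> A" "infinite S" "\<And>x. x \<in> S \<Longrightarrow> A - {x} \<in> W"
  shows "\<exists>C. crossword A W C \<and> infinite (row C ` A) \<and> infinite (col C ` A)"
proof -
  define C where "C = {(x,y). x \<in> A \<and> y \<in> A \<and> \<not> (x = y \<and> x \<in> S)}"
  have rc: "row C x = col C x" for x unfolding C_def row_def col_def by auto
  have rowx: "row C x = (if x \<in> S then A - {x} else A)" if "x \<in> A" for x
    using that unfolding C_def row_def by auto
  have cw: "crossword A W C" unfolding crossword_def
    using rowx rc S aW unfolding C_def by auto
  have "(\<lambda>x. A - {x}) ` S \<subseteq> row C ` A"
    using rowx S(1) by force
  moreover have "inj_on (\<lambda>x. A - {x}) S"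
    using S(1) by (auto simp: inj_on_def)
  ultimately have "infinite (row C ` A)"
    using S(2) finite_subset finite_imageD by metis
  then show ?thesis using cw rc by auto
qed

theorem proposition8p6:
  fixes A :: "'a set" and W :: "'a set set"
  assumes "pratt_comonoid A W" and "pratt_T1 A W"
    and "countable W" and "infinite W"
  shows "\<exists>C. crossword A W C \<and> infinite (row C ` A) \<and> infinite (col C ` A)"
proof -
  note pc = assms(1)
  have sub: "W \<subseteq> Pow A" and e: "{} \<in> W" and aW: "A \<in> W" using pc_basic[OF pc] by auto
  have T1: "\<exists>U\<in>W. a \<in> U \<and> b \<notin> U" if "a \<in> A" "b \<in> A" "a \<noteq> b" for a b
    using assms(2) that unfolding pratt_T1_def by blast
  have Ainf: "infinite A"
  proof
    assume "finite A"
    then have "finite (Pow A)" by simp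
    then have "finite W" using sub by (rule rev_finite_subset)
    then show False using assms(4) by simp
  qed
  show ?thesis
  proof (cases "infinite {x\<in>A. {x}\<in>W}")
    case True
    let ?D = "(\<lambda>x. {x}) ` {x\<in>A. {x}\<in>W}"
    have "infinite ?D" using True finite_imageD[of "\<lambda>x. {x}"] by (auto simp: inj_on_def)
    then show ?thesis by (intro disjoint_crossword[OF sub e]) auto
  next
    case F1: False
    show ?thesis
    proof (cases "infinite {x\<in>A. A - {x} \<in> W}")
      case True
      show ?thesis
      proof (rule cosingleton_crossword[OF aW])
        show "{x\<in>A. A - {x} \<in> W} \<subseteq> A" by (rule subsetI) simp
        show "infinite {x\<in>A. A - {x} \<in> W}" using True .
        fix y assume "y \<in> {x\<in>A. A - {x} \<in> W}"
        then show "A - {y} \<in> W" by simp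
      qed
    next
      case F2: False
      have "infinite (A - {x\<in>A. {x}\<in>W})" using Diff_infinite_finite[OF _ Ainf] F1 by blast
      then have "A - {x\<in>A. {x}\<in>W} \<noteq> {}" by (intro notI) simp
      then obtain b where "b \<in> A - {x\<in>A. {x}\<in>W}" by blast
      then have b: "b \<in> A" "{b} \<notin> W" by simp_all
      have "infinite (A - {x\<in>A. A - {x}\<in>W})" using Diff_infinite_finite[OF _ Ainf] F2 by blast
      then have "A - {x\<in>A. A - {x}\<in>W} \<noteq> {}" by (intro notI) simp
      then obtain x where "x \<in> A - {x\<in>A. A - {x}\<in>W}" by blast
      then have x: "x \<in> A" "A - {x} \<notin> W" by simp_all
      define f where "f = from_nat_into W"
      have "W \<noteq> {}" using e by blast
      then have frange: "range f = W" unfolding f_def using assms(3) by (rule range_from_nat_into)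
      define E where "E n = \<Union>(f ` {i. i \<le> n \<and> x \<notin> f i})" for n
      have EW: "E n \<in> W" for n
        unfolding E_def using frange by (intro pc_Union[OF pc]) auto
      have Einc: "E m \<subseteq> E n" if "m \<le> n" for m n
        unfolding E_def using that le_trans by blast
      have Enc: "\<exists>k>n. E k \<noteq> E n" for n
      proof (rule ccontr)
        assume "\<not> (\<exists>k>n. E k \<noteq> E n)"
        then have const: "E k \<subseteq> E n" for k
          using Einc by (metis linorder_not_le order_less_imp_le)
        have "E n = A - {x}"
        proof
          show "E n \<subseteq> A - {x}" unfolding E_def using frange sub by blast
        next
          show "A - {x} \<subseteq> E n"
          proof
            fix y assume y: "y \<in> A - {x}"
            then obtain U where U: "U \<in> W" "y \<in> U" "x \<notin> U" using T1[of y x] x by blast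
            then obtain i where i: "U = f i" using frange by blast
            have "y \<in> E i" unfolding E_def using U i by blast
            then show "y \<in> E n" using const by blast
          qed
        qed
        then show False using EW x by metis
      qed
      show ?thesis
      proof (cases "\<forall>G\<in>W. b \<notin> G \<longrightarrow> (\<exists>F\<in>W. b \<in> F \<and> F \<inter> G = {})")
        case True
        note ii = True
        let ?Pr = "\<lambda>P q. fst q \<in> W \<and> snd q \<in> W \<and> fst q \<noteq> {} \<and> fst q \<subseteq> P \<and> snd q \<subseteq> P \<and> b \<in> snd q \<and> fst q \<inter> snd q = {}"
        have step: "\<exists>q. ?Pr P q" if P: "P \<in> W" "b \<in> P" for P
        proof -
          have "P \<noteq> {b}" using P(1) b(2) by metis
          then obtain c where c: "c \<in> P" "c \<noteq> b" using P(2) by blast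
          have "c \<in> A" using c(1) P(1) sub by blast
          then obtain G' where G': "G' \<in> W" "c \<in> G'" "b \<notin> G'" using T1[of c b] b(1) c(2) by blast
          then obtain F where F: "F \<in> W" "b \<in> F" "F \<inter> G' = {}" using ii by blast
          have "?Pr P (G' \<inter> P, P \<inter> F)"
            using pc_inter[OF pc G'(1) P(1)] pc_inter[OF pc P(1) F(1)] F G' c P by auto
          then show ?thesis by (rule exI)
        qed
        define nx where "nx P = (SOME q. ?Pr P q)" for P
        have nx: "?Pr P (nx P)" if "P \<in> W" "b \<in> P" for P
          unfolding nx_def using someI_ex[OF step[OF that]] .
        define P where "P n = ((\<lambda>Q. snd (nx Q)) ^^ n) A" for n
        have PS: "P (Suc n) = snd (nx (P n))" for n unfolding P_def by simp
        have Pinv: "P n \<in> W \<and> b \<in> P n" for n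
        proof (induction n)
          case 0 then show ?case using aW b(1) unfolding P_def by simp
        next
          case (Suc n) then show ?case using nx[of "P n"] PS[of n] by simp
        qed
        define D where "D n = fst (nx (P n))" for n
        have Dp: "D n \<in> W \<and> D n \<noteq> {} \<and> D n \<subseteq> P n \<and> D n \<inter> P (Suc n) = {} \<and> P (Suc n) \<subseteq> P n" for n
          using nx[of "P n"] Pinv[of n] PS[of n] unfolding D_def by simp
        have Pdec: "P n \<subseteq> P m" if "m \<le> n" for m n
          using that
        proof (induction n)
          case 0 then show ?case by simp
        next
          case (Suc n)
          show ?case
          proof (cases "m \<le> n")
            case True then show ?thesis using Suc.IH Dp[of n] by blast
          next
            case False then have "m = Suc n" using Suc.prems by simp
            then show ?thesis by simp
          qed
        qed
        have Ddisj: "D m \<inter> D n = {}" if "m < n" for m n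
        proof -
          have "D n \<subseteq> P (Suc m)" using Dp[of n] Pdec[of "Suc m" n] that by auto
          then show ?thesis using Dp[of m] by blast
        qed
        have "inj D"
        proof (rule injI)
          fix m n assume eq: "D m = D n"
          show "m = n"
          proof (rule ccontr)
            assume "m \<noteq> n"
            then have "D m \<inter> D n = {}" using Ddisj[of m n] Ddisj[of n m] by (cases "m < n") (auto simp: Int_commute)
            then show False using eq Dp[of m] by simp
          qed
        qed
        then have "infinite (range D)" by (rule range_inj_infinite)
        show ?thesis
        proof (rule disjoint_crossword[OF sub e])
          show "range D \<subseteq> W" using Dp by blast
          show "infinite (range D)" by fact
          show "X \<noteq> {}" if "X \<in> range D" for X using that Dp by blast
          show "X \<inter> Y = {}" if XY: "X \<in> range D" "Y \<in> range D" "X \<noteq> Y" for X Y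
          proof -
            obtain m n where "X = D m" "Y = D n" using XY(1,2) by blast
            moreover have "m \<noteq> n" using XY(3) calculation by blast
            ultimately show ?thesis using Ddisj[of m n] Ddisj[of n m]
              by (cases "m < n") (auto simp: Int_commute)
          qed
        qed
      next
        case False
        then obtain G where G: "G \<in> W" "b \<notin> G" "\<And>F. F \<in> W \<Longrightarrow> b \<in> F \<Longrightarrow> F \<inter> G \<noteq> {}"
          by blast
        define M where "M n = G \<inter> (A \<inter> \<Inter>(f ` {i. i \<le> n \<and> b \<in> f i}))" for n
        have IW: "A \<inter> \<Inter>(f ` {i. i \<le> n \<and> b \<in> f i}) \<in> W" for n
          using frange by (intro pc_Inter[OF pc]) auto
        have MW: "M n \<in> W" for n unfolding M_def using pc_inter[OF pc G(1) IW] .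
        have Mdec: "M n \<subseteq> M m" if "m \<le> n" for m n
          unfolding M_def using that le_trans by blast
        have Mne: "M n \<noteq> {}" for n
        proof -
          have "b \<in> A \<inter> \<Inter>(f ` {i. i \<le> n \<and> b \<in> f i})" using b by auto
          then show ?thesis using G(3)[OF IW] unfolding M_def by blast
        qed
        have Mempty: "\<exists>n. y \<notin> M n" for y
        proof (cases "y \<in> G")
          case True
          then have "y \<in> A" "y \<noteq> b" using G sub by auto
          then obtain U where U: "U \<in> W" "b \<in> U" "y \<notin> U" using T1[of b y] b by blast
          then obtain i where i: "U = f i" using frange by blast
          have "y \<notin> M i" unfolding M_def using U i by blast
          then show ?thesis by blast
        next
          case False then show ?thesis unfolding M_def by blast
        qed
        have Mnc: "\<exists>k>n. M k \<noteq> M n" for n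
        proof -
          obtain y where y: "y \<in> M n" using Mne by blast
          obtain j where j: "y \<notin> M j" using Mempty by blast
          have "M (max j (Suc n)) \<subseteq> M j" using Mdec by simp
          then have "y \<notin> M (max j (Suc n))" using j by blast
          then show ?thesis using y by (intro exI[of _ "max j (Suc n)"]) auto
        qed
        show ?thesis
          using chain_crossword[OF sub e MW EW Mdec Einc Mne Mempty Mnc Enc] .
      qed
    qed
  qed
qed

end
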